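(* For every positive integer $n$, $C_S(x^n y^n) = K[x^n y^n]$.
   Context: Standing conventions: $K$ is a field, $R = K[y]$, $\sigma$ is a $K$-algebra endomorphism of $R$ with $\deg_y(\sigma(y)) > 1$, and $\delta$ is a $K$-linear $\sigma$-derivation of $R$ ($\delta(ab) = \sigma(a)\delta(b) + \delta(a)b$). $S = R[x;\sigma,\delta]$ is the Ore extension (polynomials $\sum r_i x^i$, $r_i\in R$, with $xr = \sigma(r)x + \delta(r)$). $C_S(P)$ is the centralizer of $P$ in $S$, and $K[P] = \{\sum_i c_i P^i : c_i \in K\}$. *)

theory Defs
  imports "HOL-Computational_Algebra.Polynomial"
begin

text \<open>R = K[y] is the type 'a poly (variable y = [:0,1:]).
  Elements of the Ore extension S = R[x; sigma, delta] are represented as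
  'a poly poly: the polynomial  sum_i r_i x^i  (coefficients written on the left)
  is the 'a poly poly whose i-th coefficient is r_i.\<close>

definition K_alg_endo :: "('a::field poly \<Rightarrow> 'a poly) \<Rightarrow> bool" where
  "K_alg_endo \<sigma> \<longleftrightarrow>
     (\<forall>p q. \<sigma> (p + q) = \<sigma> p + \<sigma> q) \<and>
     (\<forall>p q. \<sigma> (p * q) = \<sigma> p * \<sigma> q) \<and>
     \<sigma> 1 = 1 \<and>
     (\<forall>c p. \<sigma> (smult c p) = smult c (\<sigma> p))"

definition K_linear_sigma_derivation ::
  "('a::field poly \<Rightarrow> 'a poly) \<Rightarrow> ('a poly \<Rightarrow> 'a poly) \<Rightarrow> bool" where
  "K_linear_sigma_derivation \<sigma> \<delta> \<longleftrightarrow>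
     (\<forall>p q. \<delta> (p + q) = \<delta> p + \<delta> q) \<and>
     (\<forall>c p. \<delta> (smult c p) = smult c (\<delta> p)) \<and>
     (\<forall>a b. \<delta> (a * b) = \<sigma> a * \<delta> b + \<delta> a * b)"

text \<open>Left multiplication by x:  x * (sum_j r_j x^j) = sum_j (sigma(r_j) x^(j+1) + delta(r_j) x^j).\<close>
definition ore_xmul :: "('a::field poly \<Rightarrow> 'a poly) \<Rightarrow> ('a poly \<Rightarrow> 'a poly)
    \<Rightarrow> 'a poly poly \<Rightarrow> 'a poly poly" where
  "ore_xmul \<sigma> \<delta> p = pCons 0 (map_poly \<sigma> p) + map_poly \<delta> p"

text \<open>The element x^i r of S, expanded in the left normal form.\<close>
definition ore_xpow_mul :: "('a::field poly \<Rightarrow> 'a poly) \<Rightarrow> ('a poly \<Rightarrow> 'a poly)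
    \<Rightarrow> nat \<Rightarrow> 'a poly \<Rightarrow> 'a poly poly" where
  "ore_xpow_mul \<sigma> \<delta> i r = (ore_xmul \<sigma> \<delta> ^^ i) [:r:]"

text \<open>Multiplication in S:  (sum_i a_i x^i)(sum_j b_j x^j) = sum_{i,j} a_i (x^i b_j) x^j.\<close>
definition ore_mult :: "('a::field poly \<Rightarrow> 'a poly) \<Rightarrow> ('a poly \<Rightarrow> 'a poly)
    \<Rightarrow> 'a poly poly \<Rightarrow> 'a poly poly \<Rightarrow> 'a poly poly" where
  "ore_mult \<sigma> \<delta> p q =
     (\<Sum>i\<le>degree p. \<Sum>j\<le>degree q.
        smult (coeff p i) (ore_xpow_mul \<sigma> \<delta> i (coeff q j)) * monom 1 j)"

definition ore_power :: "('a::field poly \<Rightarrow> 'a poly) \<Rightarrow> ('a poly \<Rightarrow> 'a poly)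
    \<Rightarrow> 'a poly poly \<Rightarrow> nat \<Rightarrow> 'a poly poly" where
  "ore_power \<sigma> \<delta> P k = (ore_mult \<sigma> \<delta> P ^^ k) 1"

definition ore_centralizer :: "('a::field poly \<Rightarrow> 'a poly) \<Rightarrow> ('a poly \<Rightarrow> 'a poly)
    \<Rightarrow> 'a poly poly \<Rightarrow> 'a poly poly set" where
  "ore_centralizer \<sigma> \<delta> P = {Q. ore_mult \<sigma> \<delta> Q P = ore_mult \<sigma> \<delta> P Q}"

definition ore_K_poly_in :: "('a::field poly \<Rightarrow> 'a poly) \<Rightarrow> ('a poly \<Rightarrow> 'a poly)
    \<Rightarrow> 'a poly poly \<Rightarrow> 'a poly poly set" where
  "ore_K_poly_in \<sigma> \<delta> P =
     {Q. \<exists>(c::nat \<Rightarrow> 'a) m. Q = (\<Sum>i\<le>m. smult [:c i:] (ore_power \<sigma> \<delta> P i))}"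

end

theory Submission imports Defs "HOL-Number_Theory.Cong" begin


lemma pow_cong_mod: assumes "(d::nat) \<ge> 1"
  shows "[d^a = d^(a mod b)] (mod (d^b - 1))"
proof -
  have db: "d^b \<ge> 1" using assms by simp
  obtain x where x: "d^b = x + 1" using db by (intro that[of "d^b - 1"]) simp
  have "[x + 1 = 0 + 1] (mod x)"
    by (intro cong_add) (simp_all add: cong_def)
  then have c1: "[d^b = 1] (mod (d^b - 1))" unfolding x by simp
  have "d^a = d^(b * (a div b) + a mod b)" by simp
  also have "\<dots> = (d^b)^(a div b) * d^(a mod b)" by (simp only: power_add power_mult)
  finally have "d^a = (d^b)^(a div b) * d^(a mod b)" .
  moreover have "[(d^b)^(a div b) * d^(a mod b) = 1^(a div b) * d^(a mod b)] (mod (d^b - 1))"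
    by (rule cong_mult[OF cong_pow[OF c1] cong_refl])
  ultimately show ?thesis by simp
qed

lemma pow_cong_mod1: assumes "(d::nat) \<ge> 1"
  shows "[d^a - 1 = d^(a mod b) - 1] (mod (d^b - 1))"
  using assms by (intro cong_diff_nat pow_cong_mod cong_refl) simp_all

lemma gcd_pow_minus1: assumes "(d::nat) \<ge> 1"
  shows "gcd (d^a - 1) (d^b - 1) = d^(gcd a b) - 1"
proof (induction a b rule: gcd_nat_induct)
  case (base m) then show ?case by simp
next
  case (step m n)
  have "gcd (d^m - 1) (d^n - 1) = gcd (d^(m mod n) - 1) (d^n - 1)"
    by (rule cong_gcd_eq) (rule pow_cong_mod1[OF assms])
  also have "\<dots> = d^(gcd n (m mod n)) - 1" using step by (simp add: gcd.commute)
  also have "gcd n (m mod n) = gcd m n" by (metis gcd_red_nat)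
  finally show ?case .
qed

lemma two_k_le: "2 * k \<le> (2::nat)^k"
proof (induction k)
  case 0 then show ?case by simp
next
  case (Suc k)
  have "k < 2^k" by simp
  then show ?case by (simp only: power_Suc mult_Suc_right)
qed

lemma nt_main:
  fixes d n m e :: nat
  assumes d: "d \<ge> 2" and n: "n \<ge> 1"
    and eq: "e + d^m * (n * d^n) = n * d^n + d^n * e"
  shows "n dvd m"
proof (rule ccontr)
  assume ndvd: "\<not> n dvd m"
  define D where "D = d^n"
  define r where "r = m mod n"
  have r0: "r \<noteq> 0" using ndvd unfolding r_def by (simp add: dvd_eq_mod_eq_0)
  have rn: "r < n" unfolding r_def using n by simp
  have "d^1 \<le> d^n" by (rule power_increasing) (use n d in auto)
  then have D2: "D \<ge> 2" unfolding D_def using d by simp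
  have dm: "d^m \<ge> 1" using d by simp
  have eqi: "int e + int d^m * (int n * int D) = int n * int D + int D * int e"
    using arg_cong[OF eq, of int] unfolding D_def by simp
  have "(int D - 1) * int e = int n * int D * (int d^m - 1)"
    using eqi by (simp add: algebra_simps)
  then have "int ((D - 1) * e) = int ((n * (d^m - 1)) * D)"
    using D2 dm by (simp add: of_nat_diff algebra_simps)
  then have de: "(D - 1) * e = (n * (d^m - 1)) * D" by (simp only: of_nat_eq_iff)
  have "(D - 1) dvd (n * (d^m - 1)) * D" unfolding de[symmetric] by simp
  moreover have "coprime (D - 1) D" using D2 by (intro coprime_diff_one_left_nat) simp
  ultimately have A: "(D - 1) dvd n * (d^m - 1)" by (simp add: coprime_dvd_mult_left_iff)
  have "[n * (d^m - 1) = n * (d^r - 1)] (mod (d^n - 1))"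
    unfolding r_def using d by (intro cong_scalar_left pow_cong_mod1) simp
  then have B: "(D - 1) dvd n * (d^r - 1)" using A unfolding D_def by (simp add: cong_dvd_iff)
  define g where "g = gcd n r"
  have "(D - 1) dvd gcd (n * (D - 1)) (n * (d^r - 1))" using B by simp
  also have "gcd (n * (D - 1)) (n * (d^r - 1)) = n * (d^g - 1)"
    unfolding D_def g_def using d gcd_pow_minus1[of d n r] by (simp add: gcd_mult_distrib_nat[symmetric])
  finally have C: "(D - 1) dvd n * (d^g - 1)" .
  have g1: "g \<ge> 1" unfolding g_def using r0 by (simp add: Suc_le_eq)
  have "d^1 \<le> d^g" by (rule power_increasing) (use g1 d in auto)
  then have dg2: "d^g \<ge> 2" using d by simp
  have "n * (d^g - 1) > 0" using n dg2 by simp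
  then have le: "D - 1 \<le> n * (d^g - 1)" using C by (simp add: dvd_imp_le)
  have gdn: "g dvd n" "g dvd r" unfolding g_def by auto
  have "g \<le> r" using gdn(2) r0 by (simp add: dvd_imp_le)
  then have gn: "g < n" using rn by simp
  obtain t where t: "n = g * t" using gdn(1) by blast
  have "t \<noteq> 0" using t n by auto
  moreover have "t \<noteq> 1" using t gn by auto
  ultimately have "t \<ge> 2" by linarith
  then have "g * 2 \<le> g * t" by (rule mult_le_mono2)
  then have "2 * g \<le> n" using t by simp
  define k where "k = n - g"
  have gk: "g \<le> k" "n = g + k" unfolding k_def using \<open>2 * g \<le> n\<close> by auto
  have "2 * k \<le> 2^k" by (rule two_k_le)
  also have "(2::nat)^k \<le> d^k" using d by (simp add: power_mono)
  finally have k2: "2 * k \<le> d^k" .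
  have nk: "n \<le> 2 * k" using gk by simp
  have dgk0: "d^g \<le> d^k" using gk d by (simp add: power_increasing)
  have dgk: "int d^g \<le> int d^k" using of_nat_le_iff[of "d^g" "d^k", THEN iffD2, OF dgk0] by simp
  have dg2i: "(2::int) \<le> int d ^ g" using of_nat_le_iff[of 2 "d^g", THEN iffD2, OF dg2] by simp
  have "int n * (int d^g - 1) \<le> int d^k * (int d^g - 1)"
    using nk k2 dg2 d by (intro mult_right_mono) simp_all
  also have "\<dots> < (int d^k + 1) * (int d^g - 1)" using dg2i by (simp add: algebra_simps)
  also have "\<dots> \<le> int d^(g+k) - 1" using dgk by (simp add: algebra_simps power_add)
  finally have ineq: "int n * (int d^g - 1) < int d^(g+k) - 1" .
  have e1: "int (n * (d^g - 1)) = int n * (int d^g - 1)" using dg2 by (simp add: of_nat_diff)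
  have e2: "int (D - 1) = int d^(g+k) - 1" using D2 gk unfolding D_def by (simp add: of_nat_diff)
  have "int (n * (d^g - 1)) < int (D - 1)" unfolding e1 e2 by (rule ineq)
  then have "n * (d^g - 1) < D - 1" by (simp only: of_nat_less_iff)
  with le show False by simp
qed



locale ore =
  fixes \<sigma> \<delta> :: "'a::field poly \<Rightarrow> 'a poly"
  assumes endo: "K_alg_endo \<sigma>" and der: "K_linear_sigma_derivation \<sigma> \<delta>"
begin

lemma s_add: "\<sigma> (p + q) = \<sigma> p + \<sigma> q" using endo by (simp add: K_alg_endo_def)
lemma s_mult: "\<sigma> (p * q) = \<sigma> p * \<sigma> q" using endo by (simp add: K_alg_endo_def)
lemma s_one: "\<sigma> 1 = 1" using endo by (simp add: K_alg_endo_def)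
lemma s_smult: "\<sigma> (smult c p) = smult c (\<sigma> p)" using endo by (simp add: K_alg_endo_def)
lemma s_zero[simp]: "\<sigma> 0 = 0"
proof -
  have "\<sigma> 0 + \<sigma> 0 = \<sigma> 0 + 0" using s_add[of 0 0] by simp
  then show ?thesis by (rule add_left_imp_eq)
qed
lemma s_minus: "\<sigma> (- p) = - \<sigma> p" using s_add[of p "-p"] by (simp add: add_eq_0_iff2)
lemma s_diff: "\<sigma> (p - q) = \<sigma> p - \<sigma> q" using s_add[of p "-q"] s_minus by simp
lemma s_const: "\<sigma> [:c:] = [:c:]" using s_smult[of c 1] s_one by simp

lemma d_add: "\<delta> (p + q) = \<delta> p + \<delta> q" using der by (simp add: K_linear_sigma_derivation_def)
lemma d_smult: "\<delta> (smult c p) = smult c (\<delta> p)" using der by (simp add: K_linear_sigma_derivation_def)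
lemma d_mult: "\<delta> (a * b) = \<sigma> a * \<delta> b + \<delta> a * b" using der by (simp add: K_linear_sigma_derivation_def)
lemma d_zero[simp]: "\<delta> 0 = 0"
proof -
  have "\<delta> 0 + \<delta> 0 = \<delta> 0 + 0" using d_add[of 0 0] by simp
  then show ?thesis by (rule add_left_imp_eq)
qed
lemma d_minus: "\<delta> (- p) = - \<delta> p" using d_add[of p "-p"] by (simp add: add_eq_0_iff2)
lemma d_one: "\<delta> 1 = 0"
proof -
  have "\<delta> 1 + \<delta> 1 = \<delta> 1 + 0" using d_mult[of 1 1] s_one by simp
  then show ?thesis by (rule add_left_imp_eq)
qed
lemma d_const: "\<delta> [:c:] = 0" using d_smult[of c 1] d_one by simp

lemma s_comp: "\<sigma> p = pcompose p (\<sigma> [:0,1:])"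
proof (induction p)
  case 0 then show ?case by simp
next
  case (pCons a p)
  have "[:0,1:] * p = pCons 0 p" by simp
  then have "pCons a p = [:a:] + [:0,1:] * p" by simp
  then have "\<sigma> (pCons a p) = \<sigma> [:a:] + \<sigma> [:0,1:] * \<sigma> p" by (metis s_add s_mult)
  then show ?case using pCons by (simp add: s_const pcompose_pCons)
qed

abbreviation L where "L \<equiv> ore_xmul \<sigma> \<delta>"

lemma coeff_L: "coeff (L p) k = (case k of 0 \<Rightarrow> 0 | Suc j \<Rightarrow> \<sigma> (coeff p j)) + \<delta> (coeff p k)"
  by (simp add: ore_xmul_def coeff_map_poly coeff_pCons split: nat.split)

lemma L_add: "L (p + q) = L p + L q"
  by (rule poly_eqI) (simp add: coeff_L s_add d_add split: nat.split)
lemma L_zero[simp]: "L 0 = 0"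
  by (rule poly_eqI) (simp add: coeff_L split: nat.split)
lemma L_minus: "L (- p) = - L p"
  by (rule poly_eqI) (simp add: coeff_L s_minus d_minus split: nat.split)
lemma L_diff: "L (p - q) = L p - L q"
  using L_add[of p "-q"] L_minus[of q] by simp
lemma L_smult: "L (smult a q) = smult (\<sigma> a) (L q) + smult (\<delta> a) q"
  by (rule poly_eqI) (simp add: coeff_L s_mult d_mult algebra_simps split: nat.split)
lemma L_smult_const: "L (smult [:c:] q) = smult [:c:] (L q)"
  by (simp add: L_smult s_const d_const)
lemma L_sum: "L (\<Sum>i\<in>A. f i) = (\<Sum>i\<in>A. L (f i))"
  by (induction A rule: infinite_finite_induct) (auto simp: L_add)

lemma coeff_mult_monom1: "coeff ((p::'b::comm_semiring_1 poly) * monom 1 j) k = (if k < j then 0 else coeff p (k - j))"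
  by (simp add: mult.commute[of _ "monom 1 j"] coeff_monom_mult)

lemma L_mult_monom: "L (p * monom 1 j) = L p * monom 1 j"
proof (rule poly_eqI)
  fix k
  show "coeff (L (p * monom 1 j)) k = coeff (L p * monom 1 j) k"
  proof (cases "k < j")
    case True then show ?thesis
      by (simp add: coeff_L coeff_mult_monom1 split: nat.split)
  next
    case False
    then obtain t where t: "k = j + t" by (metis le_add_diff_inverse not_less)
    show ?thesis
    proof (cases t)
      case 0 then show ?thesis using t
        by (cases j) (simp_all add: coeff_L coeff_mult_monom1)
    next
      case (Suc u) then show ?thesis using t
        by (simp add: coeff_L coeff_mult_monom1)
    qed
  qed
qed

lemma Lpow_add: "(L^^k) (p + q) = (L^^k) p + (L^^k) q"
  by (induction k) (auto simp: L_add)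
lemma Lpow_zero[simp]: "(L^^k) 0 = 0"
  by (induction k) auto
lemma Lpow_diff: "(L^^k) (p - q) = (L^^k) p - (L^^k) q"
  by (induction k) (auto simp: L_diff)
lemma Lpow_smult_const: "(L^^k) (smult [:c:] q) = smult [:c:] ((L^^k) q)"
  by (induction k) (auto simp: L_smult_const)
lemma Lpow_sum: "(L^^k) (\<Sum>i\<in>A. f i) = (\<Sum>i\<in>A. (L^^k) (f i))"
  by (induction A rule: infinite_finite_induct) (auto simp: Lpow_add)
lemma Lpow_mult_monom: "(L^^k) (p * monom 1 j) = (L^^k) p * monom 1 j"
  by (induction k) (auto simp: L_mult_monom)

lemma L_monom1: "L (monom 1 i) = monom 1 (Suc i)"
  by (rule poly_eqI) (auto simp: coeff_L coeff_monom s_one d_one split: nat.split)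
lemma Lpow_one: "(L^^i) 1 = monom 1 i"
proof (induction i)
  case 0 show ?case by (simp add: monom_0 one_pCons)
next
  case (Suc i) then show ?case using L_monom1[of i] by simp
qed

lemma smult_sum_right: "smult a (\<Sum>i\<in>A. f i) = (\<Sum>i\<in>A. smult a (f i))"
  by (induction A rule: infinite_finite_induct) (auto simp: smult_add_right)

lemma Lpow_expand: "(\<Sum>j\<le>degree q. ore_xpow_mul \<sigma> \<delta> i (coeff q j) * monom 1 j) = (L^^i) q"
proof -
  have "q = (\<Sum>j\<le>degree q. [:coeff q j:] * monom 1 j)"
    by (simp add: smult_monom poly_as_sum_of_monoms)
  then have "(L^^i) q = (\<Sum>j\<le>degree q. (L^^i) ([:coeff q j:] * monom 1 j))"
    by (metis Lpow_sum)
  also have "\<dots> = (\<Sum>j\<le>degree q. ore_xpow_mul \<sigma> \<delta> i (coeff q j) * monom 1 j)"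
    by (intro sum.cong refl) (simp only: Lpow_mult_monom ore_xpow_mul_def)
  finally show ?thesis by simp
qed

lemma om_alt: "ore_mult \<sigma> \<delta> p q = (\<Sum>i\<le>degree p. smult (coeff p i) ((L^^i) q))"
  unfolding ore_mult_def
  by (simp add: Lpow_expand[symmetric] smult_sum_right)

lemma om_N: assumes "degree p < N"
  shows "ore_mult \<sigma> \<delta> p q = (\<Sum>i<N. smult (coeff p i) ((L^^i) q))"
  unfolding om_alt
  by (rule sum.mono_neutral_left) (use assms in \<open>auto simp: coeff_eq_0\<close>)

lemma om_add_left: "ore_mult \<sigma> \<delta> (p1 + p2) q = ore_mult \<sigma> \<delta> p1 q + ore_mult \<sigma> \<delta> p2 q"
proof -
  define N where "N = Suc (max (degree p1) (degree p2))"
  have "degree (p1 + p2) < N" unfolding N_def using degree_add_le_max[of p1 p2] by simp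
  moreover have "degree p1 < N" "degree p2 < N" unfolding N_def by auto
  ultimately show ?thesis by (simp add: om_N[where N=N] smult_add_left sum.distrib)
qed

lemma om_zero_left[simp]: "ore_mult \<sigma> \<delta> 0 q = 0"
  by (simp add: om_alt)
lemma om_zero_right[simp]: "ore_mult \<sigma> \<delta> p 0 = 0"
  by (simp add: om_alt)

lemma om_smult_left: "ore_mult \<sigma> \<delta> (smult a p) q = smult a (ore_mult \<sigma> \<delta> p q)"
proof -
  have "degree (smult a p) < Suc (degree p)" using degree_smult_le[of a p] by simp
  then show ?thesis by (simp add: om_N[where N="Suc (degree p)"] smult_sum_right del: sum.lessThan_Suc)
qed

lemma om_minus_left: "ore_mult \<sigma> \<delta> (- p) q = - ore_mult \<sigma> \<delta> p q"
  using om_smult_left[of "-1" p q] by simp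

lemma om_diff_left: "ore_mult \<sigma> \<delta> (p1 - p2) q = ore_mult \<sigma> \<delta> p1 q - ore_mult \<sigma> \<delta> p2 q"
  using om_add_left[of p1 "-p2" q] om_minus_left[of p2 q] by simp

lemma om_sum_left: "ore_mult \<sigma> \<delta> (\<Sum>i\<in>A. f i) q = (\<Sum>i\<in>A. ore_mult \<sigma> \<delta> (f i) q)"
  by (induction A rule: infinite_finite_induct) (auto simp: om_add_left)

lemma om_add_right: "ore_mult \<sigma> \<delta> p (q1 + q2) = ore_mult \<sigma> \<delta> p q1 + ore_mult \<sigma> \<delta> p q2"
  by (simp add: om_alt Lpow_add smult_add_right sum.distrib)
lemma om_diff_right: "ore_mult \<sigma> \<delta> p (q1 - q2) = ore_mult \<sigma> \<delta> p q1 - ore_mult \<sigma> \<delta> p q2"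
  by (simp add: om_alt Lpow_diff smult_diff_right sum_subtractf)
lemma om_smult_right: "ore_mult \<sigma> \<delta> p (smult [:c:] q) = smult [:c:] (ore_mult \<sigma> \<delta> p q)"
  by (simp add: om_alt Lpow_smult_const smult_sum_right mult.commute)

lemma om_one_left: "ore_mult \<sigma> \<delta> 1 q = q"
  by (simp add: om_alt)
lemma om_one_right: "ore_mult \<sigma> \<delta> p 1 = p"
  by (simp add: om_alt Lpow_one smult_monom poly_as_sum_of_monoms)

lemma om_L_left: "ore_mult \<sigma> \<delta> (L r) s = L (ore_mult \<sigma> \<delta> r s)"
proof -
  define M where "M = Suc (degree r)"
  have "degree (L r) \<le> M"
  proof (rule degree_le, intro allI impI)
    fix k assume "M < k"
    then obtain j where j: "k = Suc j" "degree r < j" unfolding M_def by (cases k) auto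
    then show "coeff (L r) k = 0" by (simp add: coeff_L coeff_eq_0)
  qed
  then have dL: "degree (L r) < Suc M" by simp
  have rM: "coeff r M = 0" unfolding M_def by (simp add: coeff_eq_0)
  define A where "A = (\<Sum>i<Suc M. smult (case i of 0 \<Rightarrow> 0 | Suc j \<Rightarrow> \<sigma> (coeff r j)) ((L^^i) s))"
  define B where "B = (\<Sum>i<Suc M. smult (\<delta> (coeff r i)) ((L^^i) s))"
  have "ore_mult \<sigma> \<delta> (L r) s = (\<Sum>i<Suc M. smult (coeff (L r) i) ((L^^i) s))"
    by (rule om_N[OF dL])
  also have "\<dots> = A + B" unfolding A_def B_def
    by (simp only: coeff_L smult_add_left sum.distrib)
  finally have 1: "ore_mult \<sigma> \<delta> (L r) s = A + B" .
  have "A = (\<Sum>i<M. smult (\<sigma> (coeff r i)) ((L^^(Suc i)) s))"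
    unfolding A_def by (subst sum.lessThan_Suc_shift) simp
  also have "\<dots> = (\<Sum>i<Suc M. smult (\<sigma> (coeff r i)) ((L^^(Suc i)) s))"
    using rM by simp
  finally have 2: "A = (\<Sum>i<Suc M. smult (\<sigma> (coeff r i)) ((L^^(Suc i)) s))" .
  have 3: "ore_mult \<sigma> \<delta> r s = (\<Sum>i<Suc M. smult (coeff r i) ((L^^i) s))"
    by (rule om_N) (simp add: M_def)
  have "L (ore_mult \<sigma> \<delta> r s) = (\<Sum>i<Suc M. L (smult (coeff r i) ((L^^i) s)))"
    unfolding 3 by (rule L_sum)
  also have "\<dots> = (\<Sum>i<Suc M. smult (\<sigma> (coeff r i)) ((L^^(Suc i)) s) + smult (\<delta> (coeff r i)) ((L^^i) s))"
    by (intro sum.cong refl) (simp only: L_smult funpow.simps o_apply)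
  also have "\<dots> = A + B" unfolding 2 B_def by (rule sum.distrib)
  finally show ?thesis using 1 by simp
qed

lemma om_Lpow_left: "ore_mult \<sigma> \<delta> ((L^^k) r) s = (L^^k) (ore_mult \<sigma> \<delta> r s)"
  by (induction k) (auto simp: om_L_left)

lemma om_assoc: "ore_mult \<sigma> \<delta> (ore_mult \<sigma> \<delta> p q) s = ore_mult \<sigma> \<delta> p (ore_mult \<sigma> \<delta> q s)"
  by (simp add: om_alt[of p q] om_alt[of p "ore_mult \<sigma> \<delta> q s"] om_sum_left om_smult_left om_Lpow_left)


end

locale ore_deg = ore +
  assumes dg: "degree (\<sigma> [:0,1:]) > 1"
begin

abbreviation d where "d \<equiv> degree (\<sigma> [:0,1:])"

lemma deg_s: "degree (\<sigma> a) = degree a * d"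
proof -
  have "degree (\<sigma> a) = degree (pcompose a (\<sigma> [:0,1:]))" by (rule arg_cong[OF s_comp])
  then show ?thesis by (simp only: degree_pcompose)
qed

lemma s_nz: "a \<noteq> 0 \<Longrightarrow> \<sigma> a \<noteq> 0"
proof -
  assume a: "a \<noteq> 0"
  have "lead_coeff (\<sigma> a) = lead_coeff (pcompose a (\<sigma> [:0,1:]))" by (rule arg_cong[OF s_comp])
  also have "\<dots> = lead_coeff a * lead_coeff (\<sigma> [:0,1:]) ^ degree a"
    by (rule lead_coeff_comp) (use dg in simp)
  finally have "lead_coeff (\<sigma> a) = lead_coeff a * lead_coeff (\<sigma> [:0,1:]) ^ degree a" .
  moreover have "\<sigma> [:0,1:] \<noteq> 0" using dg by auto
  ultimately have "lead_coeff (\<sigma> a) \<noteq> 0" using a by simp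
  then show ?thesis by auto
qed

lemma spow_deg: "degree ((\<sigma>^^k) a) = degree a * d^k"
proof (induction k)
  case 0 then show ?case by simp
next
  case (Suc k)
  have "degree ((\<sigma>^^Suc k) a) = degree ((\<sigma>^^k) a) * d" using deg_s[of "(\<sigma>^^k) a"] by simp
  then show ?case using Suc by simp
qed
lemma spow_nz: "a \<noteq> 0 \<Longrightarrow> (\<sigma>^^k) a \<noteq> 0"
  by (induction k) (auto simp: s_nz)
lemma spow_mult: "(\<sigma>^^k) (a * b) = (\<sigma>^^k) a * (\<sigma>^^k) b"
  by (induction k) (auto simp: s_mult)
lemma spow_diff: "(\<sigma>^^k) (a - b) = (\<sigma>^^k) a - (\<sigma>^^k) b"
  by (induction k) (auto simp: s_diff)
lemma spow_smult: "(\<sigma>^^k) (smult c a) = smult c ((\<sigma>^^k) a)"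
  by (induction k) (auto simp: s_smult)
lemma spow_power: "(\<sigma>^^k) (a ^ m) = ((\<sigma>^^k) a) ^ m"
proof (induction m)
  case 0 then show ?case by (induction k) (auto simp: s_one)
next
  case (Suc m) then show ?case by (simp add: spow_mult)
qed
lemma spow_add: "(\<sigma>^^(j+k)) a = (\<sigma>^^j) ((\<sigma>^^k) a)"
  by (simp add: funpow_add)

lemma coeff_L_Suc: "coeff (L p) (Suc j) = \<sigma> (coeff p j) + \<delta> (coeff p (Suc j))"
  by (simp add: coeff_L)

lemma degree_L_le: "degree p \<le> m \<Longrightarrow> degree (L p) \<le> Suc m"
proof (rule degree_le, intro allI impI)
  fix k assume "degree p \<le> m" "Suc m < k"
  then obtain j where "k = Suc j" "degree p < j" by (cases k) auto
  then show "coeff (L p) k = 0" by (simp add: coeff_L coeff_eq_0)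
qed

lemma Lpow_deg: "degree ((L^^k) q) \<le> degree q + k \<and>
   coeff ((L^^k) q) (degree q + k) = (\<sigma>^^k) (lead_coeff q)"
proof (induction k)
  case 0 then show ?case by simp
next
  case (Suc k)
  then have a: "degree ((L^^k) q) \<le> degree q + k" and b: "coeff ((L^^k) q) (degree q + k) = (\<sigma>^^k) (lead_coeff q)" by auto
  have "degree ((L^^Suc k) q) \<le> Suc (degree q + k)" using degree_L_le[OF a] by simp
  moreover have "coeff ((L^^k) q) (Suc (degree q + k)) = 0" using a by (simp add: coeff_eq_0)
  ultimately show ?case using b by (simp add: coeff_L_Suc)
qed

lemma om_coeff_high:
  assumes k: "degree p + degree q \<le> k"
  shows "coeff (ore_mult \<sigma> \<delta> p q) k =
     (if k = degree p + degree q then lead_coeff p * (\<sigma>^^degree p) (lead_coeff q) else 0)"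
proof -
  have "coeff (ore_mult \<sigma> \<delta> p q) k = (\<Sum>i\<le>degree p. coeff p i * coeff ((L^^i) q) k)"
    by (simp add: om_alt coeff_sum)
  also have "\<dots> = (\<Sum>i\<le>degree p. if i = degree p then
        (if k = degree p + degree q then lead_coeff p * (\<sigma>^^degree p) (lead_coeff q) else 0) else 0)"
  proof (intro sum.cong refl)
    fix i assume i: "i \<in> {..degree p}"
    show "coeff p i * coeff ((L^^i) q) k = (if i = degree p then
        (if k = degree p + degree q then lead_coeff p * (\<sigma>^^degree p) (lead_coeff q) else 0) else 0)"
    proof (cases "i = degree p")
      case True
      show ?thesis
      proof (cases "k = degree p + degree q")
        case True
        with \<open>i = degree p\<close> show ?thesis using Lpow_deg[of i q] by (simp add: add.commute)
      next
        case False
        then have "degree ((L^^i) q) < k" using Lpow_deg[of i q] k \<open>i = degree p\<close> by simp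
        with False \<open>i = degree p\<close> show ?thesis by (simp add: coeff_eq_0)
      qed
    next
      case False
      with i have "i < degree p" by simp
      then have "degree ((L^^i) q) < k" using Lpow_deg[of i q] k by simp
      with False show ?thesis by (simp add: coeff_eq_0)
    qed
  qed
  also have "\<dots> = (if k = degree p + degree q then lead_coeff p * (\<sigma>^^degree p) (lead_coeff q) else 0)"
    by simp
  finally show ?thesis .
qed

lemma om_deg_lead:
  assumes "p \<noteq> 0" "q \<noteq> 0"
  shows "degree (ore_mult \<sigma> \<delta> p q) = degree p + degree q"
    and "lead_coeff (ore_mult \<sigma> \<delta> p q) = lead_coeff p * (\<sigma>^^degree p) (lead_coeff q)"
proof -
  have nz: "lead_coeff p * (\<sigma>^^degree p) (lead_coeff q) \<noteq> 0"
    using assms spow_nz by simp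
  have "coeff (ore_mult \<sigma> \<delta> p q) (degree p + degree q) \<noteq> 0"
    using om_coeff_high[of p q "degree p + degree q"] nz by simp
  then have 1: "degree p + degree q \<le> degree (ore_mult \<sigma> \<delta> p q)" by (rule le_degree)
  have "degree (ore_mult \<sigma> \<delta> p q) \<le> degree p + degree q"
    by (rule degree_le) (simp add: om_coeff_high)
  with 1 show "degree (ore_mult \<sigma> \<delta> p q) = degree p + degree q" by simp
  then show "lead_coeff (ore_mult \<sigma> \<delta> p q) = lead_coeff p * (\<sigma>^^degree p) (lead_coeff q)"
    using om_coeff_high[of p q "degree p + degree q"] by simp
qed

lemma om_nz: "p \<noteq> 0 \<Longrightarrow> q \<noteq> 0 \<Longrightarrow> ore_mult \<sigma> \<delta> p q \<noteq> 0"
  using om_deg_lead(2)[of p q] spow_nz[of "lead_coeff q" "degree p"] by auto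

end


locale ore_P = ore_deg +
  fixes n :: nat
  assumes n1: "n \<ge> 1"
begin

abbreviation P where "P \<equiv> ore_mult \<sigma> \<delta> (monom 1 n) [:[:0,1:]^n:]"
abbreviation lP where "lP \<equiv> lead_coeff P"
abbreviation Pw where "Pw k \<equiv> ore_power \<sigma> \<delta> P k"
abbreviation E where "E m a \<equiv> a * (\<sigma>^^m) lP = lP * (\<sigma>^^n) a"

lemma d2: "d \<ge> 2" using dg by simp

lemma P_props: "P \<noteq> 0" "degree P = n" "lP = (\<sigma>^^n) ([:0,1:]^n)" "degree lP = n * d^n"
proof -
  have m: "monom (1::'a poly) n \<noteq> 0" "degree (monom (1::'a poly) n) = n" "lead_coeff (monom (1::'a poly) n) = 1"
    by (simp_all add: degree_monom_eq)
  have y: "[:[:0,1::'a:]^n:] \<noteq> 0" by simp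
  show "P \<noteq> 0" using om_nz[OF m(1) y] .
  show "degree P = n" using om_deg_lead(1)[OF m(1) y] m(2) by simp
  show l: "lP = (\<sigma>^^n) ([:0,1:]^n)" using om_deg_lead(2)[OF m(1) y] m by simp
  have "degree ([:0,1::'a:]^n) = n" by (simp add: degree_power_eq)
  then show "degree lP = n * d^n" unfolding l by (simp add: spow_deg)
qed

lemma l_nz: "lP \<noteq> 0" using P_props(1) by simp

lemma Pw_Suc: "Pw (Suc k) = ore_mult \<sigma> \<delta> P (Pw k)"
  by (simp add: ore_power_def)
lemma Pw_0: "Pw 0 = 1"
  by (simp add: ore_power_def)

lemma Pw_props: "Pw k \<noteq> 0 \<and> degree (Pw k) = k * n"
proof (induction k)
  case 0 then show ?case by (simp add: Pw_0)
next
  case (Suc k)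
  then show ?case using om_nz[OF P_props(1), of "Pw k"] om_deg_lead(1)[OF P_props(1), of "Pw k"] P_props(2)
    by (simp add: Pw_Suc)
qed

lemma Pw_comm: "ore_mult \<sigma> \<delta> (Pw k) P = ore_mult \<sigma> \<delta> P (Pw k)"
proof (induction k)
  case 0 then show ?case by (simp add: Pw_0 om_one_left om_one_right)
next
  case (Suc k)
  then show ?case by (simp add: Pw_Suc om_assoc)
qed

lemma om_sum_right: "ore_mult \<sigma> \<delta> p (\<Sum>i\<in>A. f i) = (\<Sum>i\<in>A. ore_mult \<sigma> \<delta> p (f i))"
  by (induction A rule: infinite_finite_induct) (auto simp: om_add_right)

lemma KP_sub: "Q \<in> ore_K_poly_in \<sigma> \<delta> P \<Longrightarrow> Q \<in> ore_centralizer \<sigma> \<delta> P"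
  unfolding ore_K_poly_in_def ore_centralizer_def
  by (auto simp: om_sum_left om_sum_right om_smult_left om_smult_right Pw_comm)

lemma lead_eq:
  assumes "Q \<noteq> 0" "ore_mult \<sigma> \<delta> Q P = ore_mult \<sigma> \<delta> P Q"
  shows "E (degree Q) (lead_coeff Q)"
  using om_deg_lead(2)[OF assms(1) P_props(1)] om_deg_lead(2)[OF P_props(1) assms(1)] assms(2) P_props(2)
  by simp

lemma E_deg:
  assumes "a \<noteq> 0" "E m a"
  shows "degree a + n * d^n * d^m = n * d^n + degree a * d^n"
proof -
  have "degree (a * (\<sigma>^^m) lP) = degree (lP * (\<sigma>^^n) a)" using assms(2) by simp
  moreover have "degree (a * (\<sigma>^^m) lP) = degree a + degree lP * d^m"
    using assms(1) l_nz spow_nz by (simp add: degree_mult_eq spow_deg)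
  moreover have "degree (lP * (\<sigma>^^n) a) = degree lP + degree a * d^n"
    using assms(1) l_nz spow_nz by (simp add: degree_mult_eq spow_deg)
  ultimately show ?thesis using P_props(4) by simp
qed

lemma dn1: "d^n \<noteq> 1"
proof -
  have "d^1 \<le> d^n" by (rule power_increasing) (use n1 d2 in auto)
  then show ?thesis using d2 n1 by simp
qed

lemma smult_const_add: "smult [:x + y:] p = smult [:x:] p + smult [:y:] p"
proof -
  have "smult [:x + y:] p = smult ([:x:] + [:y:]) p" by simp
  then show ?thesis by (simp only: smult_add_left)
qed

lemma E_deg_unique:
  assumes "a \<noteq> 0" "E m a" "b \<noteq> 0" "E m b"
  shows "degree a = degree b"
proof -
  have 1: "degree a + n * d^n * d^m = n * d^n + degree a * d^n" by (rule E_deg[OF assms(1,2)])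
  have 2: "degree b + n * d^n * d^m = n * d^n + degree b * d^n" by (rule E_deg[OF assms(3,4)])
  have "int (degree a) - int (degree b) = (int (degree a) - int (degree b)) * int (d^n)"
    using arg_cong[OF 1, of int] arg_cong[OF 2, of int] by (simp add: algebra_simps)
  then have "(int (degree a) - int (degree b)) * (int (d^n) - 1) = 0" by (simp add: algebra_simps)
  moreover have "int (d^n) - 1 \<noteq> 0"
  proof
    assume "int (d^n) - 1 = 0"
    then have "int (d^n) = int 1" by simp
    then have "d^n = 1" by (simp only: of_nat_eq_iff)
    with dn1 show False by simp
  qed
  ultimately show ?thesis by simp
qed

lemma E_unique:
  assumes "a \<noteq> 0" "E m a" "b \<noteq> 0" "E m b"
  shows "\<exists>c. a = smult c b"
proof -
  define c where "c = lead_coeff a / lead_coeff b"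
  define a' where "a' = a - smult c b"
  have db: "degree a = degree b" by (rule E_deg_unique[OF assms])
  have lb: "lead_coeff b \<noteq> 0" using assms(3) by simp
  have "E m a'"
    unfolding a'_def using assms(2,4)
    by (simp add: spow_diff spow_smult algebra_simps)
  have "a' = 0"
  proof (rule ccontr)
    assume nz: "a' \<noteq> 0"
    then have "degree a' = degree b" by (rule E_deg_unique[OF _ \<open>E m a'\<close> assms(3,4)])
    moreover have "coeff a' (degree b) = 0"
      unfolding a'_def c_def using db lb by simp
    ultimately have "lead_coeff a' = 0" by simp
    then show False using nz by simp
  qed
  then show ?thesis unfolding a'_def by auto
qed

lemma KP_zero: "0 \<in> ore_K_poly_in \<sigma> \<delta> P"
  unfolding ore_K_poly_in_def by (intro CollectI exI[of _ "\<lambda>_. 0"] exI[of _ 0]) simp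

lemma KP_add:
  assumes "Q \<in> ore_K_poly_in \<sigma> \<delta> P"
  shows "Q + smult [:c:] (Pw k) \<in> ore_K_poly_in \<sigma> \<delta> P"
proof -
  obtain f M where Q: "Q = (\<Sum>i\<le>M. smult [:f i:] (Pw i))"
    using assms unfolding ore_K_poly_in_def by blast
  define g where "g i = (if i \<le> M then f i else 0) + (if i = k then c else 0)" for i
  define M' where "M' = max M k"
  have "(\<Sum>i\<le>M'. smult [:g i:] (Pw i)) =
     (\<Sum>i\<le>M'. smult [:if i \<le> M then f i else 0:] (Pw i)) + (\<Sum>i\<le>M'. smult [:if i = k then c else 0:] (Pw i))"
    unfolding g_def by (simp only: smult_const_add sum.distrib)
  also have "(\<Sum>i\<le>M'. smult [:if i \<le> M then f i else 0:] (Pw i)) = Q"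
    unfolding Q by (rule sum.mono_neutral_cong_right) (auto simp: M'_def)
  also have "(\<Sum>i\<le>M'. smult [:if i = k then c else 0:] (Pw i)) = smult [:c:] (Pw k)"
    by (subst sum.mono_neutral_cong_right[where S="{k}"]) (auto simp: M'_def)
  finally have "Q + smult [:c:] (Pw k) = (\<Sum>i\<le>M'. smult [:g i:] (Pw i))" by simp
  then show ?thesis unfolding ore_K_poly_in_def by (intro CollectI exI)
qed

lemma C_diff:
  assumes "Q \<in> ore_centralizer \<sigma> \<delta> P"
  shows "Q - smult [:c:] (Pw k) \<in> ore_centralizer \<sigma> \<delta> P"
  using assms unfolding ore_centralizer_def
  by (simp add: om_diff_left om_diff_right om_smult_left om_smult_right Pw_comm)

lemma C_sub: "Q \<in> ore_centralizer \<sigma> \<delta> P \<Longrightarrow> Q \<in> ore_K_poly_in \<sigma> \<delta> P"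
proof (induction "degree Q" arbitrary: Q rule: less_induct)
  case less
  show ?case
  proof (cases "Q = 0")
    case True then show ?thesis using KP_zero by simp
  next
    case False
    define m where "m = degree Q"
    define a where "a = lead_coeff Q"
    have com: "ore_mult \<sigma> \<delta> Q P = ore_mult \<sigma> \<delta> P Q" using less.prems by (simp add: ore_centralizer_def)
    have Ea: "E m a" unfolding m_def a_def by (rule lead_eq[OF False com])
    have anz: "a \<noteq> 0" using False unfolding a_def by simp
    have "degree a + n * d^n * d^m = n * d^n + degree a * d^n" by (rule E_deg[OF anz Ea])
    then have "degree a + d^m * (n * d^n) = n * d^n + d^n * degree a" by (simp add: ac_simps)
    then have "n dvd m" by (rule nt_main[OF d2 n1])
    then obtain k where "m = n * k" by (elim dvdE)
    then have k: "m = k * n" by simp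
    define b where "b = lead_coeff (Pw k)"
    have Pk: "Pw k \<noteq> 0" "degree (Pw k) = m" using Pw_props[of k] k by auto
    have Eb: "E m b" unfolding b_def using lead_eq[OF Pk(1) Pw_comm[of k]] Pk(2) by simp
    have bnz: "b \<noteq> 0" using Pk(1) unfolding b_def by simp
    obtain c where c: "a = smult c b" using E_unique[OF anz Ea bnz Eb] by blast
    define Q' where "Q' = Q - smult [:c:] (Pw k)"
    have Q'C: "Q' \<in> ore_centralizer \<sigma> \<delta> P" unfolding Q'_def by (rule C_diff[OF less.prems])
    have "Q' \<in> ore_K_poly_in \<sigma> \<delta> P"
    proof (cases "Q' = 0")
      case True then show ?thesis using KP_zero by simp
    next
      case Q'nz: False
      have "degree (smult [:c:] (Pw k)) \<le> m" using Pk(2) degree_smult_le by metis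
      then have dle: "degree Q' \<le> m" unfolding Q'_def using degree_diff_le m_def by blast
      have "coeff Q' m = 0" unfolding Q'_def using c Pk(2) unfolding a_def b_def m_def
        by simp
      then have "degree Q' \<noteq> m" using Q'nz by auto
      then have "degree Q' < degree Q" using dle m_def by simp
      then show ?thesis using less.hyps Q'C by blast
    qed
    then have "Q' + smult [:c:] (Pw k) \<in> ore_K_poly_in \<sigma> \<delta> P" by (rule KP_add)
    then show ?thesis unfolding Q'_def by simp
  qed
qed

end

theorem proposition5p8:
  fixes \<sigma> \<delta> :: "'a::field poly \<Rightarrow> 'a poly" and n :: nat
  assumes "K_alg_endo \<sigma>"
    and "degree (\<sigma> [:0, 1:]) > 1"
    and "K_linear_sigma_derivation \<sigma> \<delta>"
    and "n \<ge> 1"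
  shows "ore_centralizer \<sigma> \<delta> (ore_mult \<sigma> \<delta> (monom 1 n) [:[:0, 1:] ^ n:])
       = ore_K_poly_in \<sigma> \<delta> (ore_mult \<sigma> \<delta> (monom 1 n) [:[:0, 1:] ^ n:])"
proof -
  interpret ore_P \<sigma> \<delta> n
    using assms by unfold_locales auto
  show ?thesis using C_sub KP_sub by blast
qed

end
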